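(* For integers $n\ge 1$ and $m$ with $1<m<\sqrt{2n}$, $E_m\!\left[\frac1\ell\right]<\frac{1}{E_{m-1}[\ell]}$.
   Context: $\mathbf X=\{X_1,\dots,X_n\}$ with the uniform measure. For $1\le m\le n$, $\mathcal X_m$ is the set of finite sequences $\chi=(\chi_1,\dots,\chi_\ell)$ of elements of $\mathbf X$ having exactly $m$ distinct entries and with $\chi_\ell$ different from all earlier entries; $\ell(\chi)$ is its length and $\chi$ has probability $n^{-\ell(\chi)}$. $E_m[f]=\sum_{\chi\in\mathcal X_m}f(\chi)\,n^{-\ell(\chi)}$; in particular $E_{m-1}[\ell]=\sum_{j=0}^{m-2}\frac n{n-j}$. *)

theory Defs
  imports "HOL-Analysis.Analysis"
begin

text \<open>The ground set X = {X_1,...,X_n} is modelled as {0..<n} (elements are nat below n).\<close>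

definition Xseq :: "nat \<Rightarrow> nat \<Rightarrow> nat list set" where
  "Xseq n m = {xs. xs \<noteq> [] \<and> set xs \<subseteq> {..<n} \<and> card (set xs) = m
                   \<and> last xs \<notin> set (butlast xs)}"

definition Eseq :: "nat \<Rightarrow> nat \<Rightarrow> (nat list \<Rightarrow> real) \<Rightarrow> real" where
  "Eseq n m f = (\<Sum>\<^sub>\<infinity>xs\<in>Xseq n m. f xs * (1 / real n) ^ length xs)"

end

theory Submission
  imports Defs
begin

definition W :: "nat \<Rightarrow> nat \<Rightarrow> nat list set" where
  "W n L = {b. length b = L \<and> set b \<subseteq> {..<n}}"

lemma finite_W[simp]: "finite (W n L)"
proof -
  have "W n L \<subseteq> {xs. set xs \<subseteq> {..<n} \<and> length xs \<le> L}" by (auto simp: W_def)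
  then show ?thesis using finite_lists_length_le[of "{..<n}" L] finite_subset by blast
qed

lemma card_snoc:
  "card {x \<in> W n (Suc L). Q x} = (\<Sum>b\<in>W n L. card {c. c < n \<and> Q (b @ [c])})"
proof -
  have eq: "{x \<in> W n (Suc L). Q x} = (\<lambda>(b,c). b @ [c]) ` (SIGMA b:W n L. {c. c < n \<and> Q (b @ [c])})"
  proof (intro equalityI subsetI)
    fix x assume x: "x \<in> {x \<in> W n (Suc L). Q x}"
    then have "x \<noteq> []" by (auto simp: W_def)
    then obtain b c where xb: "x = b @ [c]" by (metis rev_exhaust)
    then show "x \<in> (\<lambda>(b,c). b @ [c]) ` (SIGMA b:W n L. {c. c < n \<and> Q (b @ [c])})"
      using x by (auto simp: W_def image_iff)
  qed (auto simp: W_def)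
  have inj: "inj_on (\<lambda>(b,c). b @ [c]) (SIGMA b:W n L. {c. c < n \<and> Q (b @ [c])})"
    by (auto simp: inj_on_def)
  show ?thesis unfolding eq card_image[OF inj]
    by (subst card_SigmaI) auto
qed

definition d :: "nat \<Rightarrow> nat \<Rightarrow> nat \<Rightarrow> nat" where
  "d n k L = card {b \<in> W n L. card (set b) = k}"

definition a :: "nat \<Rightarrow> nat \<Rightarrow> nat \<Rightarrow> nat" where
  "a n k L = card {x \<in> W n L. x \<noteq> [] \<and> card (set x) = k \<and> last x \<notin> set (butlast x)}"

lemma card_ins_count:
  assumes "set b \<subseteq> {..<n}"
  shows "card {c. c < n \<and> card (insert c (set b)) = k} =
     (if card (set b) = k then k else 0) + (if Suc (card (set b)) = k then n - card (set b) else 0)"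
proof -
  let ?S = "set b"
  have fin: "finite ?S" by simp
  have e: "{c. c < n \<and> card (insert c (set b)) = k} =
     (if card ?S = k then ?S else {}) \<union> (if Suc (card ?S) = k then {..<n} - ?S else {})"
    using assms by (auto simp: card_insert_if)
  have c2: "card ({..<n} - ?S) = n - card ?S" using assms by (simp add: card_Diff_subset)
  show ?thesis unfolding e using c2 by (auto simp: card_Un_disjoint)
qed

lemma card_new_count:
  assumes "set b \<subseteq> {..<n}"
  shows "card {c. c < n \<and> card (insert c (set b)) = k \<and> c \<notin> set b} =
     (if Suc (card (set b)) = k then n - card (set b) else 0)"
proof -
  let ?S = "set b"
  have e: "{c. c < n \<and> card (insert c (set b)) = k \<and> c \<notin> set b} =
     (if Suc (card ?S) = k then {..<n} - ?S else {})"
    using assms by (auto simp: card_insert_if)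
  have c2: "card ({..<n} - ?S) = n - card ?S" using assms by (simp add: card_Diff_subset)
  show ?thesis unfolding e using c2 by auto
qed

lemma sum_if_card: "finite A \<Longrightarrow> (\<Sum>b\<in>A. if P b then (c::nat) else 0) = c * card {b\<in>A. P b}"
  by (simp add: sum.inter_filter[symmetric])

lemma d_Suc:
  assumes "k \<ge> 1"
  shows "d n k (Suc L) = k * d n k L + (n - (k - 1)) * d n (k - 1) L"
proof -
  have "d n k (Suc L) = (\<Sum>b\<in>W n L. (if card (set b) = k then k else 0) + (if Suc (card (set b)) = k then n - card (set b) else 0))"
    unfolding d_def card_snoc by (rule sum.cong) (auto simp: W_def card_ins_count)
  also have "\<dots> = (\<Sum>b\<in>W n L. if card (set b) = k then k else 0) + (\<Sum>b\<in>W n L. if card (set b) = k - 1 then n - (k - 1) else 0)"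
    unfolding sum.distrib using assms by (intro arg_cong2[where f="(+)"] sum.cong) auto
  also have "\<dots> = k * d n k L + (n - (k - 1)) * d n (k - 1) L"
    unfolding d_def by (simp add: sum_if_card)
  finally show ?thesis .
qed

lemma d_zero: "d n 0 L = (if L = 0 then 1 else 0)"
proof -
  have "{b \<in> W n L. card (set b) = 0} = (if L = 0 then {[]} else {})"
    by (auto simp: W_def)
  then show ?thesis by (simp add: d_def)
qed

lemma d_0: "d n k 0 = (if k = 0 then 1 else 0)"
proof -
  have "{b \<in> W n 0. card (set b) = k} = (if k = 0 then {[]} else {})"
    by (auto simp: W_def)
  then show ?thesis by (simp add: d_def)
qed

lemma a_Suc:
  assumes "k \<ge> 1"
  shows "a n k (Suc L) = (n - (k - 1)) * d n (k - 1) L"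
proof -
  have "a n k (Suc L) = (\<Sum>b\<in>W n L. if card (set b) = k - 1 then n - (k - 1) else 0)"
    unfolding a_def card_snoc using assms by (intro sum.cong) (auto simp: W_def card_new_count)
  then show ?thesis unfolding d_def by (simp add: sum_if_card)
qed

lemma a_0: "a n k 0 = 0"
  by (simp add: a_def W_def)

definition P :: "nat \<Rightarrow> nat \<Rightarrow> nat \<Rightarrow> real" where
  "P n k N = (\<Sum>L\<le>N. real (d n k L) * (1 / real n) ^ L)"
definition Q :: "nat \<Rightarrow> nat \<Rightarrow> nat \<Rightarrow> real" where
  "Q n k N = (\<Sum>L\<le>N. real L * real (d n k L) * (1 / real n) ^ L)"

lemma P_zero: "P n 0 N = 1"
  unfolding P_def d_zero by (induction N) auto

lemma Q_zero: "Q n 0 N = 0"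
  unfolding Q_def d_zero by (induction N) auto

lemma P_Suc:
  assumes "k \<ge> 1"
  shows "P n k (Suc N) = (1 / real n) * (real k * P n k N + real (n - (k - 1)) * P n (k - 1) N)"
proof -
  have "P n k (Suc N) = (\<Sum>L\<le>N. real (d n k (Suc L)) * (1 / real n) ^ Suc L)"
    unfolding P_def sum.atMost_Suc_shift using assms by (simp add: d_0)
  also have "\<dots> = (\<Sum>L\<le>N. (1 / real n) * (real k * (real (d n k L) * (1 / real n) ^ L)
       + real (n - (k - 1)) * (real (d n (k - 1) L) * (1 / real n) ^ L)))"
    unfolding d_Suc[OF assms] by (intro sum.cong refl) (simp only: of_nat_add of_nat_mult of_nat_Suc, simp add: algebra_simps)
  also have "\<dots> = (1 / real n) * (real k * P n k N + real (n - (k - 1)) * P n (k - 1) N)"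
    by (simp only: P_def sum_distrib_left sum.distrib distrib_left)
  finally show ?thesis .
qed

lemma Q_Suc:
  assumes "k \<ge> 1"
  shows "Q n k (Suc N) = (1 / real n) * (real k * (Q n k N + P n k N) + real (n - (k - 1)) * (Q n (k - 1) N + P n (k - 1) N))"
proof -
  have "Q n k (Suc N) = (\<Sum>L\<le>N. real (Suc L) * real (d n k (Suc L)) * (1 / real n) ^ Suc L)"
    unfolding Q_def sum.atMost_Suc_shift using assms by (simp add: d_0)
  also have "\<dots> = (\<Sum>L\<le>N. (1 / real n) * (real k * (real L * real (d n k L) * (1 / real n) ^ L + real (d n k L) * (1 / real n) ^ L)
       + real (n - (k - 1)) * (real L * real (d n (k - 1) L) * (1 / real n) ^ L + real (d n (k - 1) L) * (1 / real n) ^ L)))"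
    unfolding d_Suc[OF assms] by (intro sum.cong refl) (simp only: of_nat_add of_nat_mult of_nat_Suc, simp add: algebra_simps)
  also have "\<dots> = (1 / real n) * (real k * (Q n k N + P n k N) + real (n - (k - 1)) * (Q n (k - 1) N + P n (k - 1) N))"
    by (simp only: P_def Q_def sum_distrib_left sum.distrib distrib_left)
  finally show ?thesis .
qed

lemma P_bound:
  assumes "k < n"
  shows "P n k N \<le> real n / (real n - real k)"
  using assms
proof (induction N arbitrary: k)
  case 0
  then show ?case by (simp add: P_def d_0)
next
  case (Suc N)
  show ?case
  proof (cases "k = 0")
    case True
    then show ?thesis using Suc by (simp add: P_zero)
  next
    case False
    then have k1: "k \<ge> 1" by simp
    have h1: "P n k N \<le> real n / (real n - real k)" using Suc by blast
    have h2: "P n (k - 1) N \<le> real n / (real n - real (k - 1))" using Suc by simp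
    have nk: "real (n - (k - 1)) = real n - real (k - 1)" using Suc by simp
    have pos: "real n - real k > 0" "real n - real (k-1) > 0" using Suc by auto
    have "P n k (Suc N) \<le> (1 / real n) * (real k * (real n / (real n - real k)) + real (n - (k - 1)) * (real n / (real n - real (k - 1))))"
      unfolding P_Suc[OF k1]
      by (intro mult_left_mono add_mono mult_left_mono h1 h2) auto
    also have "\<dots> = real n / (real n - real k)"
    proof -
      define x where "x = real n - real k"
      have x0: "x > 0" using pos x_def by simp
      have e1: "real (n - (k - 1)) = x + 1" "real n - real (k - 1) = x + 1" using Suc.prems k1 by (auto simp: x_def of_nat_diff)
      have n0: "real n > 0" using Suc.prems by simp
      have "(1 / real n) * (real k * (real n / x) + (x + 1) * (real n / (x + 1))) = real k / x + 1"
      proof -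
        have "(x + 1) * (real n / (x + 1)) = real n" using x0 by simp
        moreover have "(1 / real n) * (real k * (real n / x) + real n) = real k / x + 1"
          using x0 n0 by (simp add: field_simps)
        ultimately show ?thesis by simp
      qed
      also have "\<dots> = real n / x" using x0 by (simp add: field_simps x_def)
      finally show ?thesis unfolding e1 x_def .
    qed
    finally show ?thesis .
  qed
qed

definition H :: "nat \<Rightarrow> nat \<Rightarrow> real" where
  "H n k = (\<Sum>j\<le>k. real n / (real n - real j))"

lemma H_ge1: assumes "k < n" shows "H n k \<ge> 1"
proof -
  have "H n k = real n / (real n - real 0) + (\<Sum>j\<in>{1..k}. real n / (real n - real j))"
    unfolding H_def by (simp add: atMost_atLeast0 sum.atLeast_Suc_atMost)
  moreover have "(\<Sum>j\<in>{1..k}. real n / (real n - real j)) \<ge> 0"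
    using assms by (intro sum_nonneg) auto
  moreover have "real n / (real n - real 0) = 1" using assms by simp
  ultimately show ?thesis by linarith
qed

lemma Q_0: "Q n k 0 = 0" by (simp add: Q_def)

lemma Q_bound:
  assumes "k < n"
  shows "Q n k N \<le> real n * (H n k - 1) / (real n - real k)"
  using assms
proof (induction N arbitrary: k)
  case 0
  then show ?case using H_ge1[OF 0(1)] by (simp add: Q_0)
next
  case (Suc N)
  show ?case
  proof (cases "k = 0")
    case True
    then show ?thesis using Suc H_ge1[OF Suc.prems] by (simp add: Q_zero)
  next
    case False
    then have k1: "k \<ge> 1" by simp
    define x where "x = real n - real k"
    define h where "h = H n (k - 1)"
    have x0: "x > 0" using Suc.prems by (simp add: x_def)
    have n0: "real n > 0" using Suc.prems by simp
    have e1: "real (n - (k - 1)) = x + 1" "real n - real (k - 1) = x + 1" using Suc.prems k1 by (auto simp: x_def of_nat_diff)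
    have Hk: "H n k = h + real n / x"
    proof -
      have "k = Suc (k - 1)" using k1 by simp
      then have "H n k = H n (k - 1) + real n / (real n - real (Suc (k - 1)))"
        unfolding H_def by (metis sum.atMost_Suc)
      then show ?thesis using k1 by (simp add: h_def x_def)
    qed
    have q1: "Q n k N \<le> real n * (H n k - 1) / x" using Suc by (simp add: x_def)
    have q2: "Q n (k - 1) N \<le> real n * (h - 1) / (x + 1)"
      using Suc.IH[of "k - 1"] Suc.prems e1 by (simp add: h_def)
    have p1: "P n k N \<le> real n / x" using P_bound[OF Suc.prems] by (simp add: x_def)
    have p2: "P n (k - 1) N \<le> real n / (x + 1)" using P_bound[of "k - 1" n N] Suc.prems e1 by simp
    have "Q n k (Suc N) \<le> (1 / real n) * (real k * (real n * (H n k - 1) / x + real n / x)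
        + (x + 1) * (real n * (h - 1) / (x + 1) + real n / (x + 1)))"
      unfolding Q_Suc[OF k1] e1
      using x0 by (intro mult_left_mono add_mono mult_left_mono q1 q2 p1 p2) auto
    also have "\<dots> = real k * H n k / x + h"
    proof -
      have x1: "x + 1 \<noteq> 0" using x0 by simp
      have "(x + 1) * (real n * (h - 1) / (x + 1) + real n / (x + 1)) = (x + 1) * ((real n * (h - 1) + real n) / (x + 1))"
        by (simp add: add_divide_distrib)
      also have "\<dots> = (real n * h) * (x + 1) / (x + 1)" by (simp add: algebra_simps)
      also have "\<dots> = real n * h" using x1 by simp
      finally have "(x + 1) * (real n * (h - 1) / (x + 1) + real n / (x + 1)) = real n * h" .
      moreover have "real k * (real n * (H n k - 1) / x + real n / x) = real n * (real k * H n k / x)"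
        using x0 by (simp add: field_simps)
      ultimately show ?thesis using n0 by (simp add: field_simps)
    qed
    also have "\<dots> = real n * (H n k - 1) / x"
    proof -
      have xk: "real k = real n - x" by (simp add: x_def)
      show ?thesis unfolding Hk xk using x0 by (simp add: field_simps)
    qed
    finally show ?thesis by (simp add: x_def)
  qed
qed

lemma sum_real_id: "(\<Sum>j\<le>k. real j) = real k * (real k + 1) / 2"
  by (induction k) (simp_all add: field_simps)

lemma H_lt:
  assumes "(real k + 2)^2 < 2 * real n"
  shows "H n k < real k + 2"
proof -
  have sq: "(real k + 2)^2 = real k * real k + 4 * real k + 4" by (simp add: power2_eq_square algebra_simps)
  have "0 \<le> real k * real k" by simp
  then have kn: "real k < real n" using assms sq by linarith
  define x where "x = real n - real k"
  have x0: "x > 0" using kn x_def by simp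
  have "H n k \<le> (\<Sum>j\<le>k. 1 + real j / x)"
    unfolding H_def
  proof (intro sum_mono)
    fix j assume j: "j \<in> {..k}"
    then have jk: "real j \<le> real k" by simp
    have pj: "real n - real j > 0" using jk kn by simp
    have "real n / (real n - real j) = 1 + real j / (real n - real j)"
      using pj by (simp add: field_simps)
    also have "real j / (real n - real j) \<le> real j / x"
      using jk x0 by (intro divide_left_mono) (auto simp: x_def)
    ultimately show "real n / (real n - real j) \<le> 1 + real j / x" by simp
  qed
  also have "\<dots> = (real k + 1) + real k * (real k + 1) / 2 / x"
    by (simp add: sum.distrib sum_divide_distrib[symmetric] sum_real_id)
  also have "\<dots> < real k + 2"
  proof -
    have "real k * (real k + 1) < 2 * x" using assms sq \<open>0 \<le> real k * real k\<close> by (simp add: x_def algebra_simps)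
    then have "real k * (real k + 1) / 2 / x < 1" using x0 by (simp add: field_simps)
    then show ?thesis by simp
  qed
  finally show ?thesis .
qed

lemma infsum_bound:
  fixes f :: "'a \<Rightarrow> real"
  assumes "\<And>x. x\<in>A \<Longrightarrow> f x \<ge> 0" "\<And>F. finite F \<Longrightarrow> F \<subseteq> A \<Longrightarrow> sum f F \<le> B"
  shows "f summable_on A" "infsum f A \<le> B"
proof -
  have "bdd_above (sum f ` {F. F\<subseteq>A \<and> finite F})"
    using assms(2) by (intro bdd_aboveI2[where M=B]) auto
  then show s: "f summable_on A" using assms(1) nonneg_bdd_above_summable_on by blast
  show "infsum f A \<le> B" using s assms(2) by (rule infsum_le_finite_sums)
qed

lemma partial:
  fixes h :: "nat \<Rightarrow> real"
  assumes "finite F" "F \<subseteq> Xseq n (Suc k)" "\<And>L. h L \<ge> 0"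
  shows "\<exists>N. (\<Sum>x\<in>F. h (length x) * (1 / real n) ^ length x)
     \<le> (\<Sum>L\<le>N. real (a n (Suc k) (Suc L)) * h (Suc L) * (1 / real n) ^ Suc L)"
proof -
  define N where "N = Max (length ` F)"
  define S where "S = {x \<in> Xseq n (Suc k). length x \<le> Suc N}"
  let ?g = "\<lambda>x. h (length x) * (1 / real n) ^ length x"
  have finS: "finite S"
  proof -
    have "S \<subseteq> {xs. set xs \<subseteq> {..<n} \<and> length xs \<le> Suc N}" by (auto simp: S_def Xseq_def)
    then show ?thesis using finite_lists_length_le[of "{..<n}" "Suc N"] finite_subset by blast
  qed
  have FS: "F \<subseteq> S"
  proof
    fix x assume x: "x \<in> F"
    then have "length x \<le> N" unfolding N_def using assms(1) by simp
    then show "x \<in> S" using x assms(2) by (auto simp: S_def)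
  qed
  have "(\<Sum>x\<in>F. ?g x) \<le> (\<Sum>x\<in>S. ?g x)"
    using finS FS assms(3) by (intro sum_mono2) auto
  also have "\<dots> = (\<Sum>L\<in>{..Suc N}. (\<Sum>x\<in>{x\<in>S. length x = L}. ?g x))"
    by (rule sum.group[symmetric]) (use finS in \<open>auto simp: S_def\<close>)
  also have "\<dots> = (\<Sum>L\<in>{..Suc N}. real (a n (Suc k) L) * h L * (1 / real n) ^ L)"
  proof (rule sum.cong[OF refl])
    fix L assume L: "L \<in> {..Suc N}"
    have e: "{x\<in>S. length x = L} = {x \<in> W n L. x \<noteq> [] \<and> card (set x) = Suc k \<and> last x \<notin> set (butlast x)}"
      using L by (auto simp: S_def Xseq_def W_def)
    have "(\<Sum>x\<in>{x\<in>S. length x = L}. ?g x) = (\<Sum>x\<in>{x\<in>S. length x = L}. h L * (1 / real n) ^ L)"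
      by (rule sum.cong) auto
    then show "(\<Sum>x\<in>{x\<in>S. length x = L}. ?g x) = real (a n (Suc k) L) * h L * (1 / real n) ^ L"
      unfolding a_def e[symmetric] by simp
  qed
  also have "\<dots> = (\<Sum>L\<le>N. real (a n (Suc k) (Suc L)) * h (Suc L) * (1 / real n) ^ Suc L)"
    by (simp only: sum.atMost_Suc_shift a_0)
  finally show ?thesis by blast
qed

lemma len_ge: "x \<in> Xseq n k \<Longrightarrow> k \<le> length x"
  unfolding Xseq_def using card_length[of x] by auto

lemma E_len:
  assumes "k < n"
  shows "(\<lambda>xs. real (length xs) * (1 / real n) ^ length xs) summable_on Xseq n (Suc k)"
    "Eseq n (Suc k) (\<lambda>xs. real (length xs)) \<le> H n k"
proof -
  define x where "x = real n - real k"
  have x0: "x > 0" using assms x_def by simp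
  have n0: "real n > 0" using assms by simp
  have nk: "real (n - k) = x" using assms by (simp add: x_def of_nat_diff)
  have aS: "\<And>L. real (a n (Suc k) (Suc L)) = x * real (d n k L)"
    using a_Suc[of "Suc k" n] nk by (simp only: of_nat_mult) simp
  have bound: "sum (\<lambda>xs. real (length xs) * (1 / real n) ^ length xs) F \<le> H n k"
    if F: "finite F" "F \<subseteq> Xseq n (Suc k)" for F
  proof -
    obtain N where N: "sum (\<lambda>xs. real (length xs) * (1 / real n) ^ length xs) F
       \<le> (\<Sum>L\<le>N. real (a n (Suc k) (Suc L)) * real (Suc L) * (1 / real n) ^ Suc L)"
      using partial[OF F, of real] by auto
    have "(\<Sum>L\<le>N. real (a n (Suc k) (Suc L)) * real (Suc L) * (1 / real n) ^ Suc L)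
        = (\<Sum>L\<le>N. (x * (1 / real n)) * (real L * real (d n k L) * (1 / real n) ^ L + real (d n k L) * (1 / real n) ^ L))"
      by (intro sum.cong refl) (simp add: aS algebra_simps)
    also have "\<dots> = (x * (1 / real n)) * (Q n k N + P n k N)"
      by (simp only: P_def Q_def sum_distrib_left sum.distrib distrib_left)
    also have "\<dots> \<le> (x * (1 / real n)) * (real n * (H n k - 1) / x + real n / x)"
      using Q_bound[OF assms, of N] P_bound[OF assms, of N] x0 n0
      by (intro mult_left_mono add_mono) (auto simp: x_def)
    also have "\<dots> = H n k" using x0 n0 by (simp add: field_simps)
    finally show ?thesis using N by linarith
  qed
  show "(\<lambda>xs. real (length xs) * (1 / real n) ^ length xs) summable_on Xseq n (Suc k)"
    by (rule infsum_bound(1)[OF _ bound]) auto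
  show "Eseq n (Suc k) (\<lambda>xs. real (length xs)) \<le> H n k"
    unfolding Eseq_def by (rule infsum_bound(2)[OF _ bound]) auto
qed

lemma E_inv:
  assumes "k < n"
  shows "Eseq n (Suc k) (\<lambda>xs. 1 / real (length xs)) \<le> 1 / real (Suc k)"
proof -
  define x where "x = real n - real k"
  have x0: "x > 0" using assms x_def by simp
  have n0: "real n > 0" using assms by simp
  have nk: "real (n - k) = x" using assms by (simp add: x_def of_nat_diff)
  have aS: "\<And>L. real (a n (Suc k) (Suc L)) = x * real (d n k L)"
    using a_Suc[of "Suc k" n] nk by (simp only: of_nat_mult) simp
  have bound: "sum (\<lambda>xs. 1 / real (length xs) * (1 / real n) ^ length xs) F \<le> 1 / real (Suc k)"
    if F: "finite F" "F \<subseteq> Xseq n (Suc k)" for F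
  proof -
    have "sum (\<lambda>xs. 1 / real (length xs) * (1 / real n) ^ length xs) F
        \<le> sum (\<lambda>xs. (\<lambda>_. 1 / real (Suc k)) (length xs) * (1 / real n) ^ length xs) F"
    proof (intro sum_mono mult_right_mono)
      fix xs assume "xs \<in> F"
      then have "Suc k \<le> length xs" using F len_ge by blast
      then show "1 / real (length xs) \<le> 1 / real (Suc k)" by (simp add: frac_le)
    qed simp
    moreover obtain N where N: "sum (\<lambda>xs. (\<lambda>_. 1 / real (Suc k)) (length xs) * (1 / real n) ^ length xs) F
       \<le> (\<Sum>L\<le>N. real (a n (Suc k) (Suc L)) * (1 / real (Suc k)) * (1 / real n) ^ Suc L)"
      using partial[OF F, of "\<lambda>_. 1 / real (Suc k)"] by auto
    moreover have "(\<Sum>L\<le>N. real (a n (Suc k) (Suc L)) * (1 / real (Suc k)) * (1 / real n) ^ Suc L)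
        = (1 / real (Suc k)) * (x * (1 / real n)) * P n k N"
      unfolding P_def sum_distrib_left
      by (intro sum.cong refl) (simp add: aS algebra_simps)
    moreover have "(1 / real (Suc k)) * (x * (1 / real n)) * P n k N \<le> (1 / real (Suc k)) * (x * (1 / real n)) * (real n / x)"
      using P_bound[OF assms, of N] x0 n0 by (intro mult_left_mono) (auto simp: x_def)
    moreover have "(1 / real (Suc k)) * (x * (1 / real n)) * (real n / x) = 1 / real (Suc k)"
      using x0 n0 by simp
    ultimately show ?thesis by linarith
  qed
  have nn: "\<And>xs. xs \<in> Xseq n (Suc k) \<Longrightarrow> 0 \<le> 1 / real (length xs) * (1 / real n) ^ length xs" by simp
  show ?thesis unfolding Eseq_def by (rule infsum_bound(2)[OF nn bound])
qed

theorem mainTheorem7: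
  fixes n m :: nat
  assumes "n \<ge> 1" and "1 < m" and "real m < sqrt (2 * real n)"
  shows "Eseq n m (\<lambda>xs. 1 / real (length xs))
           < 1 / Eseq n (m - 1) (\<lambda>xs. real (length xs))"
proof -
  have sq: "real m ^ 2 < 2 * real n"
  proof -
    have "real m ^ 2 < (sqrt (2 * real n)) ^ 2"
      using assms(3) by (intro power_strict_mono) auto
    then show ?thesis by simp
  qed
  define k where "k = m - 2"
  have mk: "m = Suc (Suc k)" using assms(2) k_def by simp
  have rk: "real k + 2 = real m" using mk by simp
  have Hl: "H n k < real m" using H_lt[of k n] sq rk by simp
  have "2 * real m \<le> real m ^ 2" using assms(2) by (simp add: power2_eq_square)
  then have mn: "m \<le> n" using sq by simp
  then have kn: "k < n" and m1n: "m - 1 < n" using mk by auto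
  have m1: "m - 1 = Suc k" using mk by simp
  define E1 where "E1 = Eseq n (m - 1) (\<lambda>xs. real (length xs))"
  have E1u: "E1 < real m" using E_len(2)[OF kn] Hl unfolding E1_def m1 by linarith
  let ?f = "\<lambda>xs. real (length xs) * (1 / real n) ^ length xs"
  define x0 where "x0 = [0..<Suc k]"
  have x0X: "x0 \<in> Xseq n (Suc k)"
    using kn by (auto simp: x0_def Xseq_def)
  have "infsum ?f {x0} \<le> infsum ?f (Xseq n (Suc k))"
    using x0X by (intro infsum_mono_neutral E_len(1)[OF kn]) auto
  moreover have "infsum ?f {x0} > 0" using assms(1) by (simp add: x0_def)
  ultimately have E1p: "E1 > 0" unfolding E1_def Eseq_def m1 by linarith
  have E2: "Eseq n m (\<lambda>xs. 1 / real (length xs)) \<le> 1 / real m"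
    using E_inv[OF m1n] assms(2) by simp
  have "1 / real m < 1 / E1"
    using E1p E1u by (intro divide_strict_left_mono) auto
  then show ?thesis using E2 unfolding E1_def by linarith
qed

end
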